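(* Let $\chi:\mathfrak{g}\to W_1^*\otimes\cdots\otimes W_n^*$ and $\varphi:\mathfrak{h}\to V_1^*\otimes\cdots\otimes V_m^*$ be factorization structures, and $T\subset\chi(\mathfrak{g})$, $S\subset\varphi(\mathfrak{h})$ 1-dimensional subspaces; consider the product $P=\varphi(\mathfrak{h})\otimes T+S\otimes\chi(\mathfrak{g})\subset V_1^*\otimes\cdots\otimes V_m^*\otimes W_1^*\otimes\cdots\otimes W_n^*$. Then for 1-dimensional subspaces $I\subset V_1^*\otimes\cdots\otimes V_m^*$ and $K\subset W_1^*\otimes\cdots\otimes W_n^*$ we have $I\otimes K\subset P$ if and only if either ($I=S$ and $K\subset\chi(\mathfrak{g})$) or ($K=T$ and $I\subset\varphi(\mathfrak{h})$).
   Context: All spaces are real or complex; $V_i,W_i$ are 2-dimensional. A factorization structure of dimension $m$ is an injective linear map $\varphi:\mathfrak{h}\to V_1^*\otimes\cdots\otimes V_m^*$ with $\dim\mathfrak{h}=m+1$ such that $\dim(\varphi(\mathfrak{h})\cap V_1^*\otimes\cdots\otimes\ell^0\otimes\cdots\otimes V_m^* )=1$ (with $\ell^0$, the annihilator of $\ell$, in the $j$-th slot) for every $j$ and all $\ell$ in a nonempty Zariski-open subset of $\mathbb{P}(V_j)$. The subspace $P$ is (the image of) the product factorization structure of $\varphi$ and $\chi$. *)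

theory Defs
  imports Complex_Main "HOL-Library.Function_Algebras"
begin

text \<open>Coordinates: each 2-dimensional space V_j (and its dual) is identified with
  functions bool => 'a. A tensor in the j-fold tensor product of such duals is a
  coefficient function on bool lists, supported on lists of length m.\<close>

definition tscale :: "'a::field \<Rightarrow> (bool list \<Rightarrow> 'a) \<Rightarrow> (bool list \<Rightarrow> 'a)" where
  "tscale c f = (\<lambda>l. c * f l)"

definition tspan :: "(bool list \<Rightarrow> 'a::field) set \<Rightarrow> (bool list \<Rightarrow> 'a) set" where
  "tspan X = module.span tscale X"

definition tsubspace :: "(bool list \<Rightarrow> 'a::field) set \<Rightarrow> bool" where
  "tsubspace X = module.subspace tscale X"

definition tdim :: "(bool list \<Rightarrow> 'a::field) set \<Rightarrow> nat" where
  "tdim X = vector_space.dim tscale X"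

definition ptens :: "(bool \<Rightarrow> 'a::field) list \<Rightarrow> bool list \<Rightarrow> 'a" where
  "ptens xs l = (if length l = length xs then (\<Prod>i<length xs. (xs ! i) (l ! i)) else 0)"

definition tspace :: "nat \<Rightarrow> (bool list \<Rightarrow> 'a::field) set" where
  "tspace m = tspan {ptens xs | xs. length xs = m}"

definition pairing :: "(bool \<Rightarrow> 'a::field) \<Rightarrow> (bool \<Rightarrow> 'a) \<Rightarrow> 'a" where
  "pairing \<xi> v = \<xi> True * v True + \<xi> False * v False"

definition annih :: "(bool \<Rightarrow> 'a::field) \<Rightarrow> (bool \<Rightarrow> 'a) set" where
  "annih v = {\<xi>. \<forall>c. pairing \<xi> (\<lambda>b. c * v b) = 0}"

text \<open>V_1^* \<otimes> ... \<otimes> \<ell>^0 \<otimes> ... \<otimes> V_m^*, \<ell>^0 in slot j (0-based).\<close>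
definition slot_space :: "nat \<Rightarrow> nat \<Rightarrow> (bool \<Rightarrow> 'a::field) \<Rightarrow> (bool list \<Rightarrow> 'a) set" where
  "slot_space m j v = tspan {ptens xs | xs. length xs = m \<and> xs ! j \<in> annih v}"

definition hom_eval :: "nat \<Rightarrow> (nat \<Rightarrow> 'a::field) \<Rightarrow> (bool \<Rightarrow> 'a) \<Rightarrow> 'a" where
  "hom_eval d c v = (\<Sum>k\<le>d. c k * v True ^ k * v False ^ (d - k))"

text \<open>Zariski-open subsets of P(V_j) = P^1, represented by the (scale-invariant) set of
  nonzero vectors representing their points: complement of the common zero locus of a
  family of homogeneous polynomials.\<close>
definition zariski_open_P1 :: "(bool \<Rightarrow> 'a::field) set \<Rightarrow> bool" where
  "zariski_open_P1 U \<longleftrightarrow> (\<exists>F. U = {v. v \<noteq> (\<lambda>_. 0) \<and> (\<exists>(d, c)\<in>F. hom_eval d c v \<noteq> 0)})"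

definition factorization_structure ::
  "('a::field \<Rightarrow> 'h::ab_group_add \<Rightarrow> 'h) \<Rightarrow> ('h \<Rightarrow> bool list \<Rightarrow> 'a) \<Rightarrow> nat \<Rightarrow> bool" where
  "factorization_structure sh \<phi> m \<longleftrightarrow>
     vector_space sh \<and> Vector_Spaces.linear sh tscale \<phi> \<and> inj \<phi> \<and>
     vector_space.dim sh UNIV = m + 1 \<and> range \<phi> \<subseteq> tspace m \<and>
     (\<forall>j<m. \<exists>U. zariski_open_P1 U \<and> U \<noteq> {} \<and>
        (\<forall>v\<in>U. tdim (range \<phi> \<inter> slot_space m j v) = 1))"

definition tprod :: "nat \<Rightarrow> (bool list \<Rightarrow> 'a::field) \<Rightarrow> (bool list \<Rightarrow> 'a) \<Rightarrow> bool list \<Rightarrow> 'a" where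
  "tprod m x y l = x (take m l) * y (drop m l)"

definition tens_sub :: "nat \<Rightarrow> (bool list \<Rightarrow> 'a::field) set \<Rightarrow> (bool list \<Rightarrow> 'a) set \<Rightarrow> (bool list \<Rightarrow> 'a) set" where
  "tens_sub m A B = tspan {tprod m x y | x y. x \<in> A \<and> y \<in> B}"

definition sum_sub :: "('b::plus) set \<Rightarrow> 'b set \<Rightarrow> 'b set" where
  "sum_sub A B = {a + b | a b. a \<in> A \<and> b \<in> B}"

definition is_line :: "(bool list \<Rightarrow> 'a::field) set \<Rightarrow> bool" where
  "is_line X \<longleftrightarrow> tsubspace X \<and> tdim X = 1"

end

theory Submission imports Defs begin

lemma vs_tscale: "vector_space (tscale :: 'a::field \<Rightarrow> (bool list \<Rightarrow> 'a) \<Rightarrow> _)"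
  by unfold_locales (auto simp: tscale_def fun_eq_iff algebra_simps)

interpretation tv: vector_space "tscale :: 'a::field \<Rightarrow> (bool list \<Rightarrow> 'a) \<Rightarrow> _"
  by (rule vs_tscale)

definition lineof :: "(bool list \<Rightarrow> 'a::field) \<Rightarrow> (bool list \<Rightarrow> 'a) set" where
  "lineof a = range (\<lambda>c. tscale c a)"

lemma is_line_obtain:
  assumes "is_line (X :: (bool list \<Rightarrow> 'a::field) set)"
  obtains a where "a \<noteq> 0" "X = lineof a"
proof -
  from assms have sub: "tv.subspace X" and d: "tv.dim X = 1"
    by (auto simp: is_line_def tsubspace_def tdim_def)
  obtain B where B: "B \<subseteq> X" "tv.independent B" "X \<subseteq> tv.span B" "card B = tv.dim X"
    by (rule tv.basis_exists)
  then obtain a where Ba: "B = {a}" using d by (auto simp: card_Suc_eq)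
  have "a \<noteq> 0" using B(2) Ba tv.dependent_zero by auto
  moreover have "X = tv.span {a}"
    using B Ba sub by (metis tv.span_subspace)
  ultimately show ?thesis using that by (simp add: tv.span_singleton lineof_def)
qed

lemma tspace_supp: "x \<in> tspace m \<Longrightarrow> length p \<noteq> m \<Longrightarrow> x p = 0"
  unfolding tspace_def tspan_def
proof (induction rule: tv.span_induct)
  case base
  show ?case by (auto simp: tv.subspace_def tscale_def)
next
  case (step x) thus ?case by (auto simp: ptens_def)
qed

lemma rank_lemma:
  fixes a b u s t w :: "bool list \<Rightarrow> 'a::field"
  assumes E: "\<And>p q. length p = m \<Longrightarrow> a p * b q = u p * t q + s p * w q"
    and sa: "\<And>p. length p \<noteq> m \<Longrightarrow> a p = 0"
    and su: "\<And>p. length p \<noteq> m \<Longrightarrow> u p = 0"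
    and ss: "\<And>p. length p \<noteq> m \<Longrightarrow> s p = 0"
    and a0: "a \<noteq> 0" and b0: "b \<noteq> 0" and s0: "s \<noteq> 0" and t0: "t \<noteq> 0"
  shows "((\<exists>k. a = tscale k s) \<and> (\<exists>c d. b = tscale c t + tscale d w))
       \<or> ((\<exists>k. b = tscale k t) \<and> (\<exists>c d. a = tscale c u + tscale d s))"
proof -
  obtain p0 where p0: "s p0 \<noteq> 0" using s0 by (auto simp: fun_eq_iff)
  hence lp0: "length p0 = m" using ss by blast
  obtain p1 where p1: "a p1 \<noteq> 0" using a0 by (auto simp: fun_eq_iff)
  hence lp1: "length p1 = m" using sa by blast
  obtain q1 where q1: "b q1 \<noteq> 0" using b0 by (auto simp: fun_eq_iff)
  show ?thesis
  proof (cases "\<forall>p p'. length p = m \<longrightarrow> length p' = m \<longrightarrow> u p * s p' = u p' * s p")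
    case True
    define c where "c = u p0 / s p0"
    have uc: "u p = c * s p" for p
    proof (cases "length p = m")
      case True
      with \<open>\<forall>p p'. _\<close> lp0 have "u p * s p0 = u p0 * s p" by blast
      thus ?thesis using p0 by (simp add: c_def field_simps)
    next
      case False thus ?thesis using su ss by simp
    qed
    have E2: "a p * b q = s p * (c * t q + w q)" if "length p = m" for p q
      using E[OF that, of q] uc[of p] by (simp add: algebra_simps)
    define k where "k = (c * t q1 + w q1) / b q1"
    have "a = tscale k s"
    proof (rule ext)
      fix p show "a p = tscale k s p"
      proof (cases "length p = m")
        case True
        from E2[OF True, of q1] q1 show ?thesis by (simp add: tscale_def k_def field_simps)
      next
        case False thus ?thesis using sa ss by (simp add: tscale_def)
      qed
    qed
    moreover have "b = tscale (s p1 * c / a p1) t + tscale (s p1 / a p1) w"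
    proof (rule ext)
      fix q
      from E2[OF lp1, of q] p1 show "b q = (tscale (s p1 * c / a p1) t + tscale (s p1 / a p1) w) q"
        by (simp add: tscale_def field_simps)
    qed
    ultimately show ?thesis by blast
  next
    case False
    then obtain p p' where lp: "length p = m" and lp': "length p' = m"
      and D: "u p * s p' - u p' * s p \<noteq> 0" by auto
    define D where "D = u p * s p' - u p' * s p"
    have Dn: "D \<noteq> 0" using D by (simp add: D_def)
    define \<alpha> where "\<alpha> = (a p * s p' - a p' * s p) / D"
    define \<beta> where "\<beta> = - (a p * u p' - a p' * u p) / D"
    have tq: "t q = \<alpha> * b q" for q
    proof -
      have "(a p * s p' - a p' * s p) * b q = s p' * (a p * b q) - s p * (a p' * b q)"
        by (simp add: algebra_simps)
      also have "\<dots> = s p' * (u p * t q + s p * w q) - s p * (u p' * t q + s p' * w q)"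
        using E[OF lp, of q] E[OF lp', of q] by simp
      also have "\<dots> = D * t q" by (simp add: D_def algebra_simps)
      finally have "(a p * s p' - a p' * s p) * b q = D * t q" .
      thus ?thesis using Dn by (simp add: \<alpha>_def field_simps)
    qed
    have wq: "w q = \<beta> * b q" for q
    proof -
      have "(a p * u p' - a p' * u p) * b q = u p' * (a p * b q) - u p * (a p' * b q)"
        by (simp add: algebra_simps)
      also have "\<dots> = u p' * (u p * t q + s p * w q) - u p * (u p' * t q + s p' * w q)"
        using E[OF lp, of q] E[OF lp', of q] by simp
      also have "\<dots> = - D * w q" by (simp add: D_def algebra_simps)
      finally have "(a p * u p' - a p' * u p) * b q = - D * w q" .
      thus ?thesis using Dn by (simp add: \<beta>_def field_simps)
    qed
    have an: "\<alpha> \<noteq> 0"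
    proof
      assume "\<alpha> = 0" hence "t = 0" using tq by (simp add: fun_eq_iff)
      thus False using t0 by simp
    qed
    have "b = tscale (1 / \<alpha>) t" using tq an by (simp add: fun_eq_iff tscale_def)
    moreover have "a = tscale \<alpha> u + tscale \<beta> s"
    proof (rule ext)
      fix r show "a r = (tscale \<alpha> u + tscale \<beta> s) r"
      proof (cases "length r = m")
        case True
        have "a r * b q1 = (\<alpha> * u r + \<beta> * s r) * b q1"
          using E[OF True, of q1] tq[of q1] wq[of q1] by (simp add: algebra_simps)
        thus ?thesis using q1 by (simp add: tscale_def)
      next
        case False thus ?thesis using sa su ss by (simp add: tscale_def)
      qed
    qed
    ultimately show ?thesis by blast
  qed
qed


lemma fs_range:
  assumes "factorization_structure sh (\<phi> :: 'h::ab_group_add \<Rightarrow> bool list \<Rightarrow> 'a::field) m"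
  shows "tv.subspace (range \<phi>)" "range \<phi> \<subseteq> tspace m"
proof -
  from assms have lin: "Vector_Spaces.linear sh tscale \<phi>" and r: "range \<phi> \<subseteq> tspace m"
    by (auto simp: factorization_structure_def)
  have add: "\<phi> (x + y) = \<phi> x + \<phi> y" for x y
    using lin by (simp add: Vector_Spaces.linear_iff)
  have sc: "\<phi> (sh c x) = tscale c (\<phi> x)" for x c
    using lin by (simp add: Vector_Spaces.linear_iff)
  have z: "\<phi> 0 = 0" using add[of 0 0] by simp
  show "tv.subspace (range \<phi>)" unfolding tv.subspace_def
  proof (intro conjI ballI allI)
    show "0 \<in> range \<phi>" using z by (metis rangeI)
  next
    fix x y assume "x \<in> range \<phi>" "y \<in> range \<phi>"
    then obtain x' y' where "x = \<phi> x'" "y = \<phi> y'" by auto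
    thus "x + y \<in> range \<phi>" using add[of x' y'] by (metis rangeI)
  next
    fix c x assume "x \<in> range \<phi>"
    then obtain x' where "x = \<phi> x'" by auto
    thus "tscale c x \<in> range \<phi>" using sc[of c x'] by (metis rangeI)
  qed
  show "range \<phi> \<subseteq> tspace m" by fact
qed

lemma lineof_subspace: "tv.subspace (lineof a)"
  unfolding lineof_def by (metis tv.span_singleton tv.subspace_span)

lemma lineof_in: "a \<in> lineof a"
  unfolding lineof_def by (rule range_eqI[of _ _ 1]) (simp add: tscale_def)

lemma tens_right:
  assumes R: "tv.subspace R"
  shows "tens_sub m R (lineof t) \<subseteq> {tprod m u t | u. u \<in> R}"
  unfolding tens_sub_def tspan_def
proof (rule tv.span_minimal)
  show "{tprod m x y |x y. x \<in> R \<and> y \<in> lineof t} \<subseteq> {tprod m u t |u. u \<in> R}"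
  proof clarify
    fix x y assume x: "x \<in> R" and "y \<in> lineof t"
    then obtain c where y: "y = tscale c t" by (auto simp: lineof_def)
    have "tprod m x y = tprod m (tscale c x) t" by (simp add: y tprod_def tscale_def fun_eq_iff)
    moreover have "tscale c x \<in> R" using R x by (simp add: tv.subspace_scale)
    ultimately show "\<exists>u. tprod m x y = tprod m u t \<and> u \<in> R" by blast
  qed
  show "tv.subspace {tprod m u t |u. u \<in> R}"
    unfolding tv.subspace_def
  proof (intro conjI ballI allI)
    show "0 \<in> {tprod m u t |u. u \<in> R}"
      using tv.subspace_0[OF R] by (auto intro!: exI[of _ 0] simp: tprod_def fun_eq_iff)
  next
    fix x y assume "x \<in> {tprod m u t |u. u \<in> R}" "y \<in> {tprod m u t |u. u \<in> R}"
    then obtain u v where "x = tprod m u t" "y = tprod m v t" "u \<in> R" "v \<in> R" by auto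
    thus "x + y \<in> {tprod m u t |u. u \<in> R}" using tv.subspace_add[OF R]
      by (auto intro!: exI[of _ "u + v"] simp: tprod_def fun_eq_iff algebra_simps)
  next
    fix c x assume "x \<in> {tprod m u t |u. u \<in> R}"
    then obtain u where "x = tprod m u t" "u \<in> R" by auto
    thus "tscale c x \<in> {tprod m u t |u. u \<in> R}" using tv.subspace_scale[OF R]
      by (auto intro!: exI[of _ "tscale c u"] simp: tprod_def tscale_def fun_eq_iff)
  qed
qed

lemma tens_left:
  assumes R: "tv.subspace R"
  shows "tens_sub m (lineof s) R \<subseteq> {tprod m s w | w. w \<in> R}"
  unfolding tens_sub_def tspan_def
proof (rule tv.span_minimal)
  show "{tprod m x y |x y. x \<in> lineof s \<and> y \<in> R} \<subseteq> {tprod m s w |w. w \<in> R}"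
  proof clarify
    fix x y assume "x \<in> lineof s" and y: "y \<in> R"
    then obtain c where x: "x = tscale c s" by (auto simp: lineof_def)
    have "tprod m x y = tprod m s (tscale c y)" by (simp add: x tprod_def tscale_def fun_eq_iff)
    moreover have "tscale c y \<in> R" using R y by (simp add: tv.subspace_scale)
    ultimately show "\<exists>w. tprod m x y = tprod m s w \<and> w \<in> R" by blast
  qed
  show "tv.subspace {tprod m s w |w. w \<in> R}"
    unfolding tv.subspace_def
  proof (intro conjI ballI allI)
    show "0 \<in> {tprod m s w |w. w \<in> R}"
      using tv.subspace_0[OF R] by (auto intro!: exI[of _ 0] simp: tprod_def fun_eq_iff)
  next
    fix x y assume "x \<in> {tprod m s w |w. w \<in> R}" "y \<in> {tprod m s w |w. w \<in> R}"
    then obtain u v where "x = tprod m s u" "y = tprod m s v" "u \<in> R" "v \<in> R" by auto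
    thus "x + y \<in> {tprod m s w |w. w \<in> R}" using tv.subspace_add[OF R]
      by (auto intro!: exI[of _ "u + v"] simp: tprod_def fun_eq_iff algebra_simps)
  next
    fix c x assume "x \<in> {tprod m s w |w. w \<in> R}"
    then obtain u where "x = tprod m s u" "u \<in> R" by auto
    thus "tscale c x \<in> {tprod m s w |w. w \<in> R}" using tv.subspace_scale[OF R]
      by (auto intro!: exI[of _ "tscale c u"] simp: tprod_def tscale_def fun_eq_iff algebra_simps)
  qed
qed

lemma tens_mono: "A \<subseteq> A' \<Longrightarrow> B \<subseteq> B' \<Longrightarrow> tens_sub m A B \<subseteq> tens_sub m A' B'"
  unfolding tens_sub_def tspan_def by (rule tv.span_mono) blast

lemma tens_0: "0 \<in> tens_sub m A B"
  unfolding tens_sub_def tspan_def by (rule tv.span_zero)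

lemma lineof_eq: assumes "a = tscale k s" "a \<noteq> 0" shows "lineof a = lineof s"
proof -
  have k: "k \<noteq> 0" using assms by (auto simp: tscale_def fun_eq_iff)
  have "tscale c a = tscale (c * k) s" for c using assms(1) by (simp add: tscale_def fun_eq_iff)
  moreover have "tscale c s = tscale (c / k) a" for c using assms(1) k by (simp add: tscale_def fun_eq_iff)
  ultimately show ?thesis unfolding lineof_def by (metis (no_types, lifting) rangeE rangeI subsetI subset_antisym)
qed


lemma lineof_sub: "tv.subspace R \<Longrightarrow> b \<in> R \<Longrightarrow> lineof b \<subseteq> R"
  unfolding lineof_def using tv.subspace_scale by blast

theorem lemma1p11:
  fixes sh :: "'a::real_normed_field \<Rightarrow> 'h::ab_group_add \<Rightarrow> 'h"
    and \<phi> :: "'h \<Rightarrow> bool list \<Rightarrow> 'a"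
    and sg :: "'a \<Rightarrow> 'g::ab_group_add \<Rightarrow> 'g"
    and \<chi> :: "'g \<Rightarrow> bool list \<Rightarrow> 'a"
    and m n :: nat
    and S T I K :: "(bool list \<Rightarrow> 'a) set"
  assumes "factorization_structure sg \<chi> n"
    and "factorization_structure sh \<phi> m"
    and "is_line T" and "T \<subseteq> range \<chi>"
    and "is_line S" and "S \<subseteq> range \<phi>"
    and "is_line I" and "I \<subseteq> tspace m"
    and "is_line K" and "K \<subseteq> tspace n"
  shows "tens_sub m I K \<subseteq> sum_sub (tens_sub m (range \<phi>) T) (tens_sub m S (range \<chi>))
    \<longleftrightarrow> (I = S \<and> K \<subseteq> range \<chi>) \<or> (K = T \<and> I \<subseteq> range \<phi>)"
proof -
  obtain a where a0: "a \<noteq> 0" and Ia: "I = lineof a" using assms(7) by (rule is_line_obtain)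
  obtain b where b0: "b \<noteq> 0" and Kb: "K = lineof b" using assms(9) by (rule is_line_obtain)
  obtain s where s0: "s \<noteq> 0" and Ss: "S = lineof s" using assms(5) by (rule is_line_obtain)
  obtain t where t0: "t \<noteq> 0" and Tt: "T = lineof t" using assms(3) by (rule is_line_obtain)
  have Rp: "tv.subspace (range \<phi>)" and Rpm: "range \<phi> \<subseteq> tspace m" using fs_range[OF assms(2)] by auto
  have Rc: "tv.subspace (range \<chi>)" using fs_range[OF assms(1)] by auto
  show ?thesis
  proof
    assume H: "tens_sub m I K \<subseteq> sum_sub (tens_sub m (range \<phi>) T) (tens_sub m S (range \<chi>))"
    have "tprod m a b \<in> tens_sub m I K" unfolding tens_sub_def tspan_def
      by (rule tv.span_base) (use lineof_in Ia Kb in auto)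
    with H obtain x y where x: "x \<in> tens_sub m (range \<phi>) T" and y: "y \<in> tens_sub m S (range \<chi>)"
      and xy: "tprod m a b = x + y" unfolding sum_sub_def by blast
    from x tens_right[OF Rp, of m t] Tt obtain u where u: "u \<in> range \<phi>" and xu: "x = tprod m u t" by auto
    from y tens_left[OF Rc, of m s] Ss obtain w where w: "w \<in> range \<chi>" and yw: "y = tprod m s w" by auto
    have E: "a p * b q = u p * t q + s p * w q" if "length p = m" for p q
      using fun_cong[OF xy, of "p @ q"] that by (simp add: xu yw tprod_def)
    have aI: "a \<in> I" using Ia lineof_in by auto
    have sS: "s \<in> S" using Ss lineof_in by auto
    have tT: "t \<in> T" using Tt lineof_in by auto
    have sa: "a p = 0" if "length p \<noteq> m" for p using tspace_supp[OF _ that] aI assms(8) by auto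
    have su: "u p = 0" if "length p \<noteq> m" for p using tspace_supp[OF _ that] u Rpm by auto
    have ss: "s p = 0" if "length p \<noteq> m" for p using tspace_supp[OF _ that] sS assms(6) Rpm by auto
    from rank_lemma[OF E sa su ss a0 b0 s0 t0]
    show "(I = S \<and> K \<subseteq> range \<chi>) \<or> (K = T \<and> I \<subseteq> range \<phi>)"
    proof
      assume "(\<exists>k. a = tscale k s) \<and> (\<exists>c d. b = tscale c t + tscale d w)"
      then obtain k c d where ak: "a = tscale k s" and bcd: "b = tscale c t + tscale d w" by blast
      have "I = S" using lineof_eq[OF ak a0] Ia Ss by simp
      moreover have "b \<in> range \<chi>" unfolding bcd
        using tT assms(4) w by (intro tv.subspace_add[OF Rc] tv.subspace_scale[OF Rc]) auto
      hence "K \<subseteq> range \<chi>" using Kb lineof_sub[OF Rc] by simp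
      ultimately show ?thesis by simp
    next
      assume "(\<exists>k. b = tscale k t) \<and> (\<exists>c d. a = tscale c u + tscale d s)"
      then obtain k c d where bk: "b = tscale k t" and acd: "a = tscale c u + tscale d s" by blast
      have "K = T" using lineof_eq[OF bk b0] Kb Tt by simp
      moreover have "a \<in> range \<phi>" unfolding acd
        using sS assms(6) u by (intro tv.subspace_add[OF Rp] tv.subspace_scale[OF Rp]) auto
      hence "I \<subseteq> range \<phi>" using Ia lineof_sub[OF Rp] by simp
      ultimately show ?thesis by simp
    qed
  next
    assume "(I = S \<and> K \<subseteq> range \<chi>) \<or> (K = T \<and> I \<subseteq> range \<phi>)"
    thus "tens_sub m I K \<subseteq> sum_sub (tens_sub m (range \<phi>) T) (tens_sub m S (range \<chi>))"
    proof
      assume "I = S \<and> K \<subseteq> range \<chi>"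
      hence "tens_sub m I K \<subseteq> tens_sub m S (range \<chi>)" using tens_mono by blast
      show ?thesis unfolding sum_sub_def
      proof
        fix z assume "z \<in> tens_sub m I K"
        hence "z \<in> tens_sub m S (range \<chi>)" using \<open>tens_sub m I K \<subseteq> _\<close> by blast
        thus "z \<in> {a + b |a b. a \<in> tens_sub m (range \<phi>) T \<and> b \<in> tens_sub m S (range \<chi>)}"
          using tens_0[of m "range \<phi>" T] by force
      qed
    next
      assume "K = T \<and> I \<subseteq> range \<phi>"
      hence "tens_sub m I K \<subseteq> tens_sub m (range \<phi>) T" using tens_mono by blast
      show ?thesis unfolding sum_sub_def
      proof
        fix z assume "z \<in> tens_sub m I K"
        hence "z \<in> tens_sub m (range \<phi>) T" using \<open>tens_sub m I K \<subseteq> _\<close> by blast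
        thus "z \<in> {a + b |a b. a \<in> tens_sub m (range \<phi>) T \<and> b \<in> tens_sub m S (range \<chi>)}"
          using tens_0[of m S "range \<chi>"] by (intro CollectI exI[of _ z] exI[of _ 0]) simp
      qed
    qed
  qed
qed

end
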